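(* Let $X$ be a Polish space, $(Y,d)$ a Polish metric space, $Z$ a topological space, and $P: X \rightsquigarrow Y$ a tight Feller kernel. Let $R \subseteq X \times Z$ and $S \subseteq Y \times Z$ be closed and $\epsilon \ge 0$. Then $$P_{!W}^\epsilon(R \cap P^{*,0}_W S) \subseteq P_{!W}^\epsilon R \cap \{(\nu,z) \in \mathcal{P}(Y) \times Z : \nu \in \mathrm{Cure}_\epsilon(S_z)\}.$$
   Context: $W_1(\mu,\nu) = \inf_{\pi \in \Pi(\mu,\nu)} \int d(y,y')\,d\pi$. For closed $A \subseteq Y$, $\mathcal{P}_A = \{\nu \in \mathcal{P}_1(Y) : \mathrm{supp}(\nu) \subseteq A\}$ ($\mathcal{P}_1$ = probability measures with finite first moment) and $W_1(\mu,\mathcal{P}_A) = \inf_{\nu \in \mathcal{P}_A} W_1(\mu,\nu)$; $\mathrm{Cure}_\epsilon(A) = \{\nu \in \mathcal{P}(Y) : W_1(\nu, \mathcal{P}_A) \le \epsilon\}$. $S_z = \{y : (y,z) \in S\}$. Wasserstein pullback: $P^{*,\eta}_W S = \{(x,z) : W_1(P(x), \mathcal{P}_{S_z}) \le \eta\}$. Wasserstein pushforward: $P_{!W}^\epsilon T = \{(\nu,z) \in \mathcal{P}(Y) \times Z : \exists x,\ (x,z) \in T,\ W_1(P(x),\nu) \le \epsilon\}$. Feller/tight as usual for Markov kernels. *)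

theory Defs
  imports "HOL-Analysis.Analysis" "HOL-Probability.Probability"
begin

definition prob_measures :: "'a::topological_space measure set" where
  "prob_measures = {\<nu>. sets \<nu> = sets borel \<and> prob_space \<nu>}"

definition prob_measures_1 :: "'a::metric_space measure set" where
  "prob_measures_1 = {\<nu> \<in> prob_measures. \<exists>y0. (\<integral>\<^sup>+ y. ennreal (dist y0 y) \<partial>\<nu>) < \<infinity>}"

definition supp :: "'a::topological_space measure \<Rightarrow> 'a set" where
  "supp \<nu> = {y. \<forall>U. open U \<longrightarrow> y \<in> U \<longrightarrow> 0 < emeasure \<nu> U}"

definition couplings :: "'a::topological_space measure \<Rightarrow> 'a measure \<Rightarrow> ('a \<times> 'a) measure set" where
  "couplings \<mu> \<nu> = {\<pi>. sets \<pi> = sets borel \<and> prob_space \<pi> \<and>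
                         distr \<pi> borel fst = \<mu> \<and> distr \<pi> borel snd = \<nu>}"

definition W1 :: "'a::metric_space measure \<Rightarrow> 'a measure \<Rightarrow> ennreal" where
  "W1 \<mu> \<nu> = (INF \<pi> \<in> couplings \<mu> \<nu>. \<integral>\<^sup>+ p. ennreal (dist (fst p) (snd p)) \<partial>\<pi>)"

definition PA :: "'a::metric_space set \<Rightarrow> 'a measure set" where
  "PA A = {\<nu> \<in> prob_measures_1. supp \<nu> \<subseteq> A}"

definition W1_set :: "'a::metric_space measure \<Rightarrow> 'a set \<Rightarrow> ennreal" where
  "W1_set \<mu> A = (INF \<nu> \<in> PA A. W1 \<mu> \<nu>)"

definition Cure :: "real \<Rightarrow> 'a::metric_space set \<Rightarrow> 'a measure set" where
  "Cure \<epsilon> A = {\<nu> \<in> prob_measures. W1_set \<nu> A \<le> ennreal \<epsilon>}"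

definition section_at :: "('y \<times> 'z) set \<Rightarrow> 'z \<Rightarrow> 'y set" where
  "section_at S z = {y. (y, z) \<in> S}"

definition W_pullback :: "('x \<Rightarrow> 'y::metric_space measure) \<Rightarrow> real \<Rightarrow> ('y \<times> 'z) set \<Rightarrow> ('x \<times> 'z) set" where
  "W_pullback P \<eta> S = {(x, z). W1_set (P x) (section_at S z) \<le> ennreal \<eta>}"

definition W_pushforward :: "('x \<Rightarrow> 'y::metric_space measure) \<Rightarrow> real \<Rightarrow> ('x \<times> 'z) set \<Rightarrow> ('y measure \<times> 'z) set" where
  "W_pushforward P \<epsilon> T = {(\<nu>, z). \<nu> \<in> prob_measures \<and> (\<exists>x. (x, z) \<in> T \<and> W1 (P x) \<nu> \<le> ennreal \<epsilon>)}"

definition markov_kernel :: "('x::topological_space \<Rightarrow> 'y::topological_space measure) \<Rightarrow> bool" where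
  "markov_kernel P \<longleftrightarrow> P \<in> borel \<rightarrow>\<^sub>M prob_algebra borel"

definition feller :: "('x::topological_space \<Rightarrow> 'y::topological_space measure) \<Rightarrow> bool" where
  "feller P \<longleftrightarrow> (\<forall>f :: 'y \<Rightarrow> real. continuous_on UNIV f \<and> bounded (range f) \<longrightarrow>
                    continuous_on UNIV (\<lambda>x. \<integral> y. f y \<partial>(P x)))"

definition tight_kernel :: "('x \<Rightarrow> 'y::topological_space measure) \<Rightarrow> bool" where
  "tight_kernel P \<longleftrightarrow> (\<forall>e>0. \<exists>K. compact K \<and> (\<forall>x. measure (P x) (UNIV - K) \<le> e))"

end

theory Submission
  imports Defs
begin

lemma meas_cont:
  assumes "sets M = sets borel" "continuous_on UNIV f"
  shows "f \<in> borel_measurable M"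
  by (subst measurable_cong_sets[OF assms(1) refl]) (rule borel_measurable_continuous_onI[OF assms(2)])

lemma supp_null:
  fixes \<nu> :: "'a::{metric_space,second_countable_topology} measure"
  assumes "closed A" "sets \<nu> = sets borel" "supp \<nu> \<subseteq> A"
  shows "emeasure \<nu> (- A) = 0"
proof -
  define F where "F = {U. open U \<and> U \<subseteq> - A \<and> emeasure \<nu> U = 0}"
  have opF: "\<And>S. S \<in> F \<Longrightarrow> open S" by (auto simp: F_def)
  have UF: "\<Union>F = - A"
  proof
    show "\<Union>F \<subseteq> - A" by (auto simp: F_def)
    show "- A \<subseteq> \<Union>F"
    proof
      fix y assume y: "y \<in> - A"
      then have "y \<notin> supp \<nu>" using assms(3) by auto
      then obtain U where U: "open U" "y \<in> U" "\<not> 0 < emeasure \<nu> U" unfolding supp_def by auto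
      have "U \<inter> - A \<in> sets \<nu>" using U assms(1,2) by auto
      then have "emeasure \<nu> (U \<inter> - A) \<le> emeasure \<nu> U"
        using U assms(2) by (intro emeasure_mono) auto
      then have "emeasure \<nu> (U \<inter> - A) = 0" using U by (simp add: not_less)
      then have "U \<inter> - A \<in> F" using U assms(1) by (auto simp: F_def)
      then show "y \<in> \<Union>F" using U y by blast
    qed
  qed
  obtain F' where F': "F' \<subseteq> F" "countable F'" "\<Union>F' = \<Union>F" using Lindelof[OF opF] by blast
  have "(\<Union>U\<in>F'. U) \<in> null_sets \<nu>"
  proof (rule null_sets_UN'[OF F'(2)])
    fix U assume "U \<in> F'"
    then have "U \<in> F" using F' by auto
    then show "U \<in> null_sets \<nu>" using assms(2) by (auto simp: F_def null_sets_def)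
  qed
  then show ?thesis using F' UF by auto
qed

lemma space_borel_eq: "sets M = sets (borel::'a::topological_space measure) \<Longrightarrow> space M = UNIV"
  using sets_eq_imp_space_eq by fastforce

lemma markov_bound:
  fixes \<mu> \<rho> :: "'a::{metric_space,second_countable_topology} measure"
  assumes A: "closed A" and sm: "sets \<mu> = sets borel" and rho: "\<rho> \<in> PA A"
    and pi: "\<pi> \<in> couplings \<mu> \<rho>" and r: "r > 0" and disj: "ball y r \<inter> A = {}"
  shows "ennreal (r/2) * emeasure \<mu> (ball y (r/2)) \<le> (\<integral>\<^sup>+ p. ennreal (dist (fst p) (snd p)) \<partial>\<pi>)"
proof -
  define B where "B = ball y (r/2)"
  define C where "C = B \<times> A"
  have sp: "sets \<pi> = sets borel" and m1: "distr \<pi> borel fst = \<mu>" and m2: "distr \<pi> borel snd = \<rho>"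
    using pi by (auto simp: couplings_def)
  have spc: "space \<pi> = UNIV" using space_borel_eq[OF sp] .
  have srho: "sets \<rho> = sets borel" "supp \<rho> \<subseteq> A" using rho by (auto simp: PA_def prob_measures_1_def prob_measures_def)
  have rho0: "emeasure \<rho> (- A) = 0" using supp_null[OF A srho] .
  have "C = (B \<times> UNIV) \<inter> (UNIV \<times> A)" by (auto simp: C_def)
  moreover have "open (B \<times> (UNIV::'a set))" by (auto simp: B_def intro: open_Times)
  moreover have "closed ((UNIV::'a set) \<times> A)" using A by (auto intro: closed_Times)
  ultimately have Cs: "C \<in> sets \<pi>" using sp by auto
  have fm: "fst \<in> measurable \<pi> borel" "snd \<in> measurable \<pi> borel"
    by (rule meas_cont[OF sp], intro continuous_intros)+
  have "(\<integral>\<^sup>+ p. ennreal (r/2) * indicator C p \<partial>\<pi>) \<le> (\<integral>\<^sup>+ p. ennreal (dist (fst p) (snd p)) \<partial>\<pi>)"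
  proof (rule nn_integral_mono)
    fix p :: "'a \<times> 'a"
    show "ennreal (r/2) * indicator C p \<le> ennreal (dist (fst p) (snd p))"
    proof (cases "p \<in> C")
      case True
      then have "dist y (fst p) < r/2" "snd p \<in> A" by (auto simp: C_def B_def)
      moreover have "dist y (snd p) \<ge> r" using disj \<open>snd p \<in> A\<close> by (metis IntI empty_iff mem_ball not_less)
      moreover have "dist y (snd p) \<le> dist y (fst p) + dist (fst p) (snd p)" by (rule dist_triangle)
      ultimately have "r/2 \<le> dist (fst p) (snd p)" by linarith
      then show ?thesis using True by (simp add: ennreal_leI)
    qed simp
  qed
  also note calc = calculation
  have "(\<integral>\<^sup>+ p. ennreal (r/2) * indicator C p \<partial>\<pi>) = ennreal (r/2) * emeasure \<pi> C"
    using Cs by (rule nn_integral_cmult_indicator)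
  moreover have "emeasure \<mu> B \<le> emeasure \<pi> C"
  proof -
    have Bs: "B \<in> sets borel" by (auto simp: B_def)
    have "emeasure \<mu> B = emeasure \<pi> (fst -` B \<inter> space \<pi>)"
      using m1 emeasure_distr[OF fm(1) Bs] by simp
    also have "fst -` B \<inter> space \<pi> \<subseteq> C \<union> (snd -` (- A) \<inter> space \<pi>)" by (auto simp: C_def spc)
    hence "emeasure \<pi> (fst -` B \<inter> space \<pi>) \<le> emeasure \<pi> (C \<union> (snd -` (- A) \<inter> space \<pi>))"
      using Cs fm(2) A by (intro emeasure_mono) (auto intro!: sets.Un measurable_sets)
    also have "\<dots> \<le> emeasure \<pi> C + emeasure \<pi> (snd -` (- A) \<inter> space \<pi>)"
      using Cs fm(2) A by (intro emeasure_subadditive) (auto intro!: measurable_sets)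
    also have "emeasure \<pi> (snd -` (- A) \<inter> space \<pi>) = emeasure \<rho> (- A)"
      using m2 emeasure_distr[OF fm(2), of "- A"] A by auto
    finally show ?thesis using rho0 by simp
  qed
  ultimately have "ennreal (r/2) * emeasure \<mu> B \<le> (\<integral>\<^sup>+ p. ennreal (r/2) * indicator C p \<partial>\<pi>)"
    by (simp add: mult_left_mono)
  then show ?thesis using calc unfolding B_def by (rule order_trans)
qed

lemma W1_swap:
  fixes \<mu> \<nu> :: "'a::{metric_space,second_countable_topology} measure"
  shows "W1 \<nu> \<mu> \<le> W1 \<mu> \<nu>"
  unfolding W1_def
proof (rule INF_greatest)
  fix \<pi> assume pi: "\<pi> \<in> couplings \<mu> \<nu>"
  have sp: "sets \<pi> = sets borel" and ps: "prob_space \<pi>" and m1: "distr \<pi> borel fst = \<mu>" and m2: "distr \<pi> borel snd = \<nu>"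
    using pi by (auto simp: couplings_def)
  define sw where "sw = (\<lambda>p::'a\<times>'a. (snd p, fst p))"
  have swm: "sw \<in> measurable \<pi> borel" unfolding sw_def
    by (rule meas_cont[OF sp], intro continuous_intros)
  have fb: "fst \<in> measurable (borel::('a\<times>'a) measure) borel" "snd \<in> measurable (borel::('a\<times>'a) measure) borel"
    by (rule meas_cont[OF refl], intro continuous_intros)+
  define \<pi>' where "\<pi>' = distr \<pi> borel sw"
  have "\<pi>' \<in> couplings \<nu> \<mu>"
    unfolding couplings_def
  proof (intro CollectI conjI)
    show "sets \<pi>' = sets borel" by (simp add: \<pi>'_def)
    show "prob_space \<pi>'" unfolding \<pi>'_def using ps swm by (rule prob_space.prob_space_distr)
    have "distr \<pi>' borel fst = distr \<pi> borel (fst \<circ> sw)" unfolding \<pi>'_def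
      by (rule distr_distr[OF fb(1) swm])
    also have "fst \<circ> sw = snd" by (auto simp: sw_def)
    finally show "distr \<pi>' borel fst = \<nu>" using m2 by simp
    have "distr \<pi>' borel snd = distr \<pi> borel (snd \<circ> sw)" unfolding \<pi>'_def
      by (rule distr_distr[OF fb(2) swm])
    also have "snd \<circ> sw = fst" by (auto simp: sw_def)
    finally show "distr \<pi>' borel snd = \<mu>" using m1 by simp
  qed
  moreover have "(\<integral>\<^sup>+ p. ennreal (dist (fst p) (snd p)) \<partial>\<pi>') = (\<integral>\<^sup>+ p. ennreal (dist (fst p) (snd p)) \<partial>\<pi>)"
  proof -
    have dm: "(\<lambda>p::'a\<times>'a. ennreal (dist (fst p) (snd p))) \<in> borel_measurable borel"
      by (rule measurable_compose[OF _ measurable_ennreal], rule meas_cont[OF refl], intro continuous_intros)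
    have "(\<integral>\<^sup>+ p. ennreal (dist (fst p) (snd p)) \<partial>\<pi>') = (\<integral>\<^sup>+ p. ennreal (dist (fst (sw p)) (snd (sw p))) \<partial>\<pi>)"
      unfolding \<pi>'_def by (rule nn_integral_distr[OF swm]) (simp add: dm)
    also have "\<dots> = (\<integral>\<^sup>+ p. ennreal (dist (fst p) (snd p)) \<partial>\<pi>)"
      by (rule nn_integral_cong) (simp add: sw_def dist_commute)
    finally show ?thesis .
  qed
  ultimately show "(INF \<pi>\<in>couplings \<nu> \<mu>. \<integral>\<^sup>+ p. ennreal (dist (fst p) (snd p)) \<partial>\<pi>) \<le> (\<integral>\<^sup>+ p. ennreal (dist (fst p) (snd p)) \<partial>\<pi>)"
    by (intro INF_lower2[of \<pi>']) simp_all
qed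

theorem mainTheorem20:
  fixes P :: "'x::polish_space \<Rightarrow> 'y::polish_space measure"
    and R :: "('x \<times> 'z::topological_space) set"
    and S :: "('y \<times> 'z) set"
    and \<epsilon> :: real
  assumes "markov_kernel P" and "feller P" and "tight_kernel P"
    and "closed R" and "closed S" and "\<epsilon> \<ge> 0"
  shows "W_pushforward P \<epsilon> (R \<inter> W_pullback P 0 S)
           \<subseteq> W_pushforward P \<epsilon> R \<inter> {(\<nu>, z). \<nu> \<in> prob_measures \<and> \<nu> \<in> Cure \<epsilon> (section_at S z)}"
proof (intro subsetI)
  fix q assume q: "q \<in> W_pushforward P \<epsilon> (R \<inter> W_pullback P 0 S)"
  obtain \<nu> z where qe: "q = (\<nu>, z)" by (cases q)
  define A where "A = section_at S z"
  from q obtain x where nu: "\<nu> \<in> prob_measures" and xR: "(x, z) \<in> R"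
    and W0: "W1_set (P x) A \<le> 0" and We: "W1 (P x) \<nu> \<le> ennreal \<epsilon>"
    unfolding qe W_pushforward_def W_pullback_def A_def by auto
  define \<mu> where "\<mu> = P x"
  have "P x \<in> space (prob_algebra borel)"
    using assms(1) unfolding markov_kernel_def by (rule measurable_space) simp
  then have sm: "sets \<mu> = sets borel" and pm: "prob_space \<mu>"
    unfolding \<mu>_def space_prob_algebra by auto
  have W00: "W1_set \<mu> A = 0" using W0 unfolding \<mu>_def by simp
  have Acl: "closed A" unfolding A_def section_at_def
  proof -
    have "{y. (y, z) \<in> S} = (\<lambda>y. (y, z)) -` S" by auto
    moreover have "closed ((\<lambda>y. (y, z)) -` S)"
      by (rule continuous_closed_vimage[OF assms(5)]) (intro continuous_intros)
    ultimately show "closed {y. (y, z) \<in> S}" by simp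
  qed
  have supp: "supp \<mu> \<subseteq> A"
  proof
    fix y assume ys: "y \<in> supp \<mu>"
    show "y \<in> A"
    proof (rule ccontr)
      assume "y \<notin> A"
      then obtain r where r: "r > 0" "ball y r \<subseteq> - A"
        using Acl open_contains_ball[of "- A"] by (auto simp: open_Compl)
      then have disj: "ball y r \<inter> A = {}" by auto
      have "ennreal (r/2) * emeasure \<mu> (ball y (r/2)) \<le> W1_set \<mu> A"
        unfolding W1_set_def W1_def
        by (intro INF_greatest markov_bound[OF Acl sm _ _ r(1) disj])
      then have "ennreal (r/2) * emeasure \<mu> (ball y (r/2)) = 0" using W00 by (metis le_zero_eq)
      moreover have "ennreal (r/2) \<noteq> 0" using r by simp
      ultimately have "emeasure \<mu> (ball y (r/2)) = 0" by (metis mult_eq_0_iff)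
      moreover have "0 < emeasure \<mu> (ball y (r/2))"
        using ys r unfolding supp_def by auto
      ultimately show False by simp
    qed
  qed
  have mom: "\<exists>y0. (\<integral>\<^sup>+ y. ennreal (dist y0 y) \<partial>\<mu>) < \<infinity>"
  proof -
    have "W1_set \<mu> A < 1" using W00 by simp
    then obtain \<rho> where rho: "\<rho> \<in> PA A" "W1 \<mu> \<rho> < 1" unfolding W1_set_def by (auto simp: INF_less_iff)
    then obtain \<pi> where pi: "\<pi> \<in> couplings \<mu> \<rho>" and piI: "(\<integral>\<^sup>+ p. ennreal (dist (fst p) (snd p)) \<partial>\<pi>) < 1"
      unfolding W1_def by (auto simp: INF_less_iff)
    obtain y0 where y0: "(\<integral>\<^sup>+ y. ennreal (dist y0 y) \<partial>\<rho>) < \<infinity>"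
      using rho(1) unfolding PA_def prob_measures_1_def by auto
    have sp: "sets \<pi> = sets borel" and m1: "distr \<pi> borel fst = \<mu>" and m2: "distr \<pi> borel snd = \<rho>"
      using pi by (auto simp: couplings_def)
    have fm: "fst \<in> measurable \<pi> borel" "snd \<in> measurable \<pi> borel"
      by (rule meas_cont[OF sp], intro continuous_intros)+
    have dm: "(\<lambda>y. ennreal (dist y0 y)) \<in> borel_measurable borel"
      by (rule measurable_compose[OF _ measurable_ennreal], rule meas_cont[OF refl], intro continuous_intros)
    have dm1: "(\<lambda>p. ennreal (dist y0 (snd p))) \<in> borel_measurable \<pi>"
      by (rule measurable_compose[OF _ measurable_ennreal], rule meas_cont[OF sp], intro continuous_intros)
    have dm2: "(\<lambda>p. ennreal (dist (fst p) (snd p))) \<in> borel_measurable \<pi>"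
      by (rule measurable_compose[OF _ measurable_ennreal], rule meas_cont[OF sp], intro continuous_intros)
    have "(\<integral>\<^sup>+ y. ennreal (dist y0 y) \<partial>\<mu>) = (\<integral>\<^sup>+ p. ennreal (dist y0 (fst p)) \<partial>\<pi>)"
      unfolding m1[symmetric] by (rule nn_integral_distr[OF fm(1)]) (simp add: dm)
    also have "\<dots> \<le> (\<integral>\<^sup>+ p. ennreal (dist y0 (snd p)) + ennreal (dist (fst p) (snd p)) \<partial>\<pi>)"
    proof (rule nn_integral_mono)
      fix p :: "'y \<times> 'y"
      have "dist y0 (fst p) \<le> dist y0 (snd p) + dist (fst p) (snd p)"
        by (metis dist_commute dist_triangle)
      then show "ennreal (dist y0 (fst p)) \<le> ennreal (dist y0 (snd p)) + ennreal (dist (fst p) (snd p))"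
        by (metis ennreal_plus zero_le_dist ennreal_leI)
    qed
    also have "\<dots> = (\<integral>\<^sup>+ p. ennreal (dist y0 (snd p)) \<partial>\<pi>) + (\<integral>\<^sup>+ p. ennreal (dist (fst p) (snd p)) \<partial>\<pi>)"
      by (rule nn_integral_add[OF dm1 dm2])
    also have "(\<integral>\<^sup>+ p. ennreal (dist y0 (snd p)) \<partial>\<pi>) = (\<integral>\<^sup>+ y. ennreal (dist y0 y) \<partial>\<rho>)"
      unfolding m2[symmetric] by (rule nn_integral_distr[OF fm(2), symmetric]) (simp add: dm)
    finally have le: "(\<integral>\<^sup>+ y. ennreal (dist y0 y) \<partial>\<mu>) \<le> (\<integral>\<^sup>+ y. ennreal (dist y0 y) \<partial>\<rho>) + (\<integral>\<^sup>+ p. ennreal (dist (fst p) (snd p)) \<partial>\<pi>)" .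
    have "(1::ennreal) < \<infinity>" by simp
    then have "(\<integral>\<^sup>+ p. ennreal (dist (fst p) (snd p)) \<partial>\<pi>) < \<infinity>" using piI by (rule_tac order.strict_trans)
    then have "(\<integral>\<^sup>+ y. ennreal (dist y0 y) \<partial>\<rho>) + (\<integral>\<^sup>+ p. ennreal (dist (fst p) (snd p)) \<partial>\<pi>) < \<infinity>"
      using y0 by (auto simp: ennreal_add_less_top)
    then have "(\<integral>\<^sup>+ y. ennreal (dist y0 y) \<partial>\<mu>) < \<infinity>" using le by (rule le_less_trans[rotated])
    then show ?thesis by blast
  qed
  have muPA: "\<mu> \<in> PA A"
    using sm pm supp mom unfolding PA_def prob_measures_1_def prob_measures_def by auto
  have "W1_set \<nu> A \<le> W1 \<nu> \<mu>" unfolding W1_set_def by (rule INF_lower[OF muPA])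
  also have "\<dots> \<le> W1 \<mu> \<nu>" by (rule W1_swap)
  also have "\<dots> \<le> ennreal \<epsilon>" using We unfolding \<mu>_def .
  finally have "W1_set \<nu> A \<le> ennreal \<epsilon>" .
  then show "q \<in> W_pushforward P \<epsilon> R \<inter> {(\<nu>, z). \<nu> \<in> prob_measures \<and> \<nu> \<in> Cure \<epsilon> (section_at S z)}"
    using nu xR We unfolding qe W_pushforward_def Cure_def A_def by auto
qed

end
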